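(* Let $0<\rho_1<1$. There is $\epsilon_0\in(0,1)$ such that for every $0<\epsilon<\epsilon_0$ there is $q_0$ such that the following holds for every prime $q\ge q_0$. Let $S\subseteq\mathbb{Z}/q\mathbb{Z}$ with $|S|\ge\rho_1 q$, and let $h$ be an integer with $1\le h\le q-1$ such that $S'=\{hs\bmod q : s\in S\}$ satisfies: for every integer $a$ with $|a|\le q/2$ and $|f_{S'}(a/q)|>\epsilon|S|$ one has $|a|<q^{1-\rho_1\epsilon^2}$. Let $k$ be an integer and $v$ an integer with $1\le v<q^{\rho_1\epsilon^2/4}$, and let $W=W(k,v)$. Then for every real $u$ with $$5vq^{-\rho_1\epsilon^2}\le |u|\le \tfrac12$$ we have $|f_W(u)|<2\pi\left(\frac{\epsilon}{\rho_1}\right)^{1/3}|S|$.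
   Context: $e(u)=\exp(2\pi i u)$. For a finite set of integers $T$ (subsets of $\mathbb{Z}/q\mathbb{Z}$ being identified with their least nonnegative residues in $\{0,\dots,q-1\}$), $f_T(t)=\sum_{s\in T}e(st)$. Given $S,h$ as in the claim, an integer $k$ and an integer $v$ with $1\le v<q^{\rho_1\epsilon^2/4}$, $W(k,v)\subseteq\{0,1,\dots,q-1\}$ is the set of least nonnegative residues modulo $q$ of the numbers $(4v)^{-1}hs+k$, $s\in S$, where $(4v)^{-1}$ denotes the inverse of $4v$ modulo $q$. *)

theory Defs
  imports "HOL-Analysis.Analysis" "HOL-Number_Theory.Number_Theory"
begin

definition e :: "real \<Rightarrow> complex" where
  "e u = exp (2 * pi * \<i> * complex_of_real u)"

definition fT :: "int set \<Rightarrow> real \<Rightarrow> complex" where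
  "fT T t = (\<Sum>s\<in>T. e (real_of_int s * t))"

definition inv_modq :: "int \<Rightarrow> int \<Rightarrow> int" where
  "inv_modq q a = (SOME x. 0 \<le> x \<and> x < q \<and> [a * x = 1] (mod q))"

definition W :: "int \<Rightarrow> int set \<Rightarrow> int \<Rightarrow> int \<Rightarrow> int \<Rightarrow> int set" where
  "W q S h k v = (\<lambda>s. (inv_modq q (4 * v) * h * s + k) mod q) ` S"

end

theory Submission
  imports Defs
begin

lemma jordan:
  fixes x :: real
  assumes "0 \<le> x" "x \<le> pi/2"
  shows "2 * x / pi \<le> sin x"
proof -
  have conc: "concave_on {0..pi/2} sin"
    by (rule f''_le0_imp_concave[where f'=cos and f''="\<lambda>x. - sin x"])
       (auto intro!: derivative_eq_intros sin_ge_zero)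
  define t where "t = 2 * x / pi"
  have t: "0 \<le> t" "t \<le> 1" using assms by (auto simp: t_def field_simps)
  have "sin ((1 - t) *\<^sub>R 0 + t *\<^sub>R (pi/2)) \<ge> (1 - t) * sin 0 + t * sin (pi/2)"
    using concave_onD[OF conc, of t 0 "pi/2"] t by auto
  moreover have "(1 - t) *\<^sub>R 0 + t *\<^sub>R (pi/2) = x" by (simp add: t_def)
  ultimately show ?thesis by (simp add: t_def)
qed

lemma e_add: "e (a + b) = e a * e b"
  unfolding e_def by (simp add: distrib_left exp_add)
lemma e_int: "e (of_int n) = 1"
proof -
  have "e (of_int n) = exp ((2 * of_int n * pi) * \<i>)" unfolding e_def by (simp add: mult_ac)
  also have "\<dots> = 1" by (rule exp_integer_2pi) simp
  finally show ?thesis .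
qed
lemma norm_e [simp]: "cmod (e x) = 1"
proof -
  have "e x = exp (\<i> * of_real (2 * pi * x))" unfolding e_def by (simp add: mult_ac)
  then show ?thesis by (simp only: norm_exp_i_times)
qed
lemma e_pow: "e (of_nat n * x) = e x ^ n"
proof -
  have "e (of_nat n * x) = exp (of_nat n * (2 * pi * \<i> * of_real x))" unfolding e_def by (simp add: mult_ac)
  also have "\<dots> = e x ^ n" unfolding e_def by (rule exp_of_nat_mult)
  finally show ?thesis .
qed
lemma e_period: "e (x + of_int n) = e x"
  by (simp add: e_add e_int)

lemma e_zero [simp]: "e 0 = 1" unfolding e_def by simp

lemma norm_e_sub1: "cmod (e x - 1) = 2 * \<bar>sin (pi * x)\<bar>"
proof -
  have "e x = exp (\<i> * of_real (2 * pi * x))" unfolding e_def by (simp add: mult_ac)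
  then show ?thesis using dist_exp_i_1[of "2*pi*x"] by simp
qed

lemma norm_e_sub1_ge:
  assumes "\<bar>x\<bar> \<le> 1/2"
  shows "4 * \<bar>x\<bar> \<le> cmod (e x - 1)"
proof -
  have "2 * (pi * \<bar>x\<bar>) / pi \<le> sin (pi * \<bar>x\<bar>)"
    using jordan[of "pi * \<bar>x\<bar>"] assms by (auto simp: field_simps)
  moreover have "sin (pi * \<bar>x\<bar>) = \<bar>sin (pi * x)\<bar>"
  proof (cases "x \<ge> 0")
    case True
    then have "0 \<le> sin (pi * x)" using assms by (intro sin_ge_zero) auto
    then show ?thesis using True by simp
  next
    case False
    then have "sin (pi * \<bar>x\<bar>) = - sin (pi * x)" by simp
    moreover have "sin (pi * \<bar>x\<bar>) \<ge> 0" using assms by (auto intro!: sin_ge_zero)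
    ultimately show ?thesis by linarith
  qed
  ultimately show ?thesis by (simp add: norm_e_sub1)
qed

lemma e_eq_1_iff: "e x = 1 \<longleftrightarrow> x \<in> \<int>"
proof -
  have "e x = 1 \<longleftrightarrow> (\<exists>n::int. 2 * pi * x = of_int (2 * n) * pi)"
    unfolding e_def exp_eq_1 by simp
  also have "\<dots> \<longleftrightarrow> (\<exists>n::int. x = of_int n)" by auto
  also have "\<dots> \<longleftrightarrow> x \<in> \<int>" by (auto elim: Ints_cases)
  finally show ?thesis .
qed


lemma Dsum_bound:
  assumes "0 < \<bar>x\<bar>" "\<bar>x\<bar> \<le> 1/2"
  shows "cmod (\<Sum>n<N. e (real n * x)) \<le> 1 / (2 * \<bar>x\<bar>)"
proof -
  have ne: "4 * \<bar>x\<bar> \<le> cmod (e x - 1)" using norm_e_sub1_ge assms(2) .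
  then have z1: "e x \<noteq> 1" using assms by auto
  have "(\<Sum>n<N. e (real n * x)) = (\<Sum>n<N. e x ^ n)" by (simp add: e_pow)
  also have "\<dots> = (e x ^ N - 1) / (e x - 1)" by (rule geometric_sum[OF z1])
  finally have eq: "(\<Sum>n<N. e (real n * x)) = (e x ^ N - 1) / (e x - 1)" .
  have "cmod (e x ^ N - 1) \<le> 2"
    using norm_triangle_ineq4[of "e x ^ N" 1] by (simp add: norm_power)
  then have "cmod ((e x ^ N - 1) / (e x - 1)) \<le> 2 / (4 * \<bar>x\<bar>)"
    unfolding norm_divide using ne assms(1)
    by (intro frac_le) auto
  then show ?thesis using eq by simp
qed

lemma Dsum_triv: "cmod (\<Sum>n<N. e (real n * x)) \<le> real N"
  using norm_sum[of "\<lambda>n. e (real n * x)" "{..<N}"] by simp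

lemma interval_reindex:
  fixes c :: int
  shows "(\<Sum>b\<in>{c..<c+int q}. f b) = (\<Sum>j<q. f (c + int j))"
proof -
  have "{c..<c+int q} = (\<lambda>j. c + int j) ` {..<q}"
  proof
    show "{c..<c + int q} \<subseteq> (\<lambda>j. c + int j) ` {..<q}"
    proof
      fix b assume "b \<in> {c..<c + int q}"
      then show "b \<in> (\<lambda>j. c + int j) ` {..<q}"
        by (intro image_eqI[where x="nat (b - c)"]) auto
    qed
  qed auto
  moreover have "inj_on (\<lambda>j. c + int j) {..<q}" by (auto simp: inj_on_def)
  ultimately show ?thesis by (simp add: sum.reindex)
qed

lemma e_int_div_not1:
  assumes "q > 0" "\<not> int q dvd m"
  shows "e (of_int m / real q) \<noteq> 1"
proof
  assume "e (of_int m / real q) = 1"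
  then have "of_int m / real q \<in> \<int>" by (simp add: e_eq_1_iff)
  then obtain n where n: "of_int m / real q = of_int n" by (auto elim: Ints_cases)
  then have "of_int m = real_of_int (n * int q)" using assms(1) by (simp add: field_simps)
  then have "m = n * int q" by linarith
  then show False using assms(2) by simp
qed

lemma orth:
  fixes m c :: int
  assumes "q > 0"
  shows "(\<Sum>b\<in>{c..<c+int q}. e (of_int (m * b) / real q)) = (if int q dvd m then of_nat q else 0)"
proof -
  have "(\<Sum>b\<in>{c..<c+int q}. e (of_int (m * b) / real q))
        = (\<Sum>j<q. e (of_int (m * c) / real q) * e (of_int m / real q) ^ j)"
    unfolding interval_reindex
  proof (rule sum.cong[OF refl])
    fix j assume "j \<in> {..<q}"
    have eq: "of_int (m * (c + int j)) / real q = of_int (m * c) / real q + real j * (of_int m / real q)"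
      by (simp add: add_divide_distrib algebra_simps)
    show "e (of_int (m * (c + int j)) / real q) = e (of_int (m * c) / real q) * e (of_int m / real q) ^ j"
      unfolding eq e_add e_pow by (rule refl)
  qed
  also have "\<dots> = e (of_int (m * c) / real q) * (\<Sum>j<q. e (of_int m / real q) ^ j)"
    by (simp add: sum_distrib_left)
  also have "\<dots> = (if int q dvd m then of_nat q else 0)"
  proof (cases "int q dvd m")
    case True
    then obtain n where n: "m = int q * n" by (auto elim: dvdE)
    have "of_int m / real q = of_int n" using assms by (simp add: n)
    moreover have "of_int (m * c) / real q = of_int (n * c)" using assms by (simp add: n)
    ultimately show ?thesis using True e_int[of "n*c"] e_int[of n] by simp
  next
    case False
    have z1: "e (of_int m / real q) \<noteq> 1" by (rule e_int_div_not1[OF assms False])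
    have "e (of_int m / real q) ^ q = e (real q * (of_int m / real q))" by (rule e_pow[symmetric])
    also have "\<dots> = 1" using assms by (simp add: e_int)
    finally have "(\<Sum>j<q. e (of_int m / real q) ^ j) = 0"
      by (simp add: geometric_sum[OF z1])
    then show ?thesis using False by simp
  qed
  finally show ?thesis .
qed


lemma cnj_e: "cnj (e x) = e (- x)"
  unfolding e_def by (simp add: exp_cnj)

lemma dvd_small_int:
  fixes x :: int
  assumes "q dvd x" "\<bar>x\<bar> < q"
  shows "x = 0"
proof (rule ccontr)
  assume nz: "x \<noteq> 0"
  from assms(1) obtain k where x: "x = q * k" by (auto elim: dvdE)
  then have k: "k \<noteq> 0" using nz by auto
  have "\<bar>x\<bar> = \<bar>q\<bar> * \<bar>k\<bar>" by (simp add: x abs_mult)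
  moreover have "\<bar>q\<bar> * 1 \<le> \<bar>q\<bar> * \<bar>k\<bar>" using k by (intro mult_left_mono) auto
  ultimately show False using assms(2) by linarith
qed

lemma sum_delta_mod:
  fixes w :: int
  assumes "0 \<le> w" "w < int q"
  shows "(\<Sum>n<q. f n * (if int q dvd (w - int n) then (of_nat q :: complex) else 0)) = of_nat q * f (nat w)"
proof -
  have "\<And>n. n < q \<Longrightarrow> (int q dvd (w - int n)) = (n = nat w)"
  proof -
    fix n assume n: "n < q"
    show "(int q dvd (w - int n)) = (n = nat w)"
    proof
      assume "int q dvd (w - int n)"
      moreover have "\<bar>w - int n\<bar> < int q" using assms n by auto
      ultimately have "w - int n = 0" by (rule dvd_small_int)
      then show "n = nat w" by auto
    qed (use assms in auto)
  qed
  then have "(\<Sum>n<q. f n * (if int q dvd (w - int n) then (of_nat q :: complex) else 0))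
      = (\<Sum>n<q. (if n = nat w then of_nat q * f n else 0))"
    by (intro sum.cong) auto
  also have "\<dots> = of_nat q * f (nat w)" using assms by (subst sum.delta) auto
  finally show ?thesis .
qed

lemma inversion:
  fixes W :: "int set" and c :: int
  assumes q: "q > 0" and W: "W \<subseteq> {0..<int q}"
  shows "fT W u = (1 / of_nat q) * (\<Sum>b\<in>{c..<c+int q}.
            (\<Sum>w\<in>W. e (of_int (w * b) / real q)) * (\<Sum>n<q. e (real n * (u - of_int b / real q))))"
proof -
  have fin: "finite W" using W finite_subset by blast
  have "(\<Sum>b\<in>{c..<c+int q}.
            (\<Sum>w\<in>W. e (of_int (w * b) / real q)) * (\<Sum>n<q. e (real n * (u - of_int b / real q))))
      = (\<Sum>b\<in>{c..<c+int q}. \<Sum>w\<in>W. \<Sum>n<q. e (real n * u) * e (of_int ((w - int n) * b) / real q))"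
  proof (intro sum.cong refl)
    fix b
    show "(\<Sum>w\<in>W. e (of_int (w * b) / real q)) * (\<Sum>n<q. e (real n * (u - of_int b / real q)))
      = (\<Sum>w\<in>W. \<Sum>n<q. e (real n * u) * e (of_int ((w - int n) * b) / real q))"
      unfolding sum_product
    proof (intro sum.cong refl)
      fix w n
      have "of_int (w * b) / real q + real n * (u - of_int b / real q)
          = real n * u + of_int ((w - int n) * b) / real q"
        using q by (simp add: field_simps)
      then show "e (of_int (w * b) / real q) * e (real n * (u - of_int b / real q))
          = e (real n * u) * e (of_int ((w - int n) * b) / real q)"
        by (metis e_add)
    qed
  qed
  also have "\<dots> = (\<Sum>w\<in>W. \<Sum>n<q. e (real n * u) * (\<Sum>b\<in>{c..<c+int q}. e (of_int ((w - int n) * b) / real q)))"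
    by (simp add: sum.swap[of _ "{c..<c+int q}"] sum_distrib_left)
  also have "\<dots> = (\<Sum>w\<in>W. \<Sum>n<q. e (real n * u) * (if int q dvd (w - int n) then of_nat q else 0))"
    by (simp only: orth[OF q])
  also have "\<dots> = (\<Sum>w\<in>W. of_nat q * e (real (nat w) * u))"
    using W by (intro sum.cong refl sum_delta_mod) auto
  also have "\<dots> = of_nat q * fT W u"
    unfolding fT_def sum_distrib_left using W by (intro sum.cong refl) auto
  finally show ?thesis using q by simp
qed

lemma parseval:
  fixes W :: "int set" and c :: int
  assumes q: "q > 0" and W: "W \<subseteq> {0..<int q}"
  shows "(\<Sum>b\<in>{c..<c+int q}. (cmod (\<Sum>w\<in>W. e (of_int (w * b) / real q)))\<^sup>2) = real q * real (card W)"
proof -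
  have fin: "finite W" using W finite_subset by blast
  have "complex_of_real (\<Sum>b\<in>{c..<c+int q}. (cmod (\<Sum>w\<in>W. e (of_int (w * b) / real q)))\<^sup>2)
     = (\<Sum>b\<in>{c..<c+int q}. (\<Sum>w\<in>W. e (of_int (w * b) / real q)) * cnj (\<Sum>w\<in>W. e (of_int (w * b) / real q)))"
    by (simp only: of_real_sum complex_norm_square)
  also have "\<dots> = (\<Sum>b\<in>{c..<c+int q}. \<Sum>w\<in>W. \<Sum>w'\<in>W. e (of_int ((w - w') * b) / real q))"
  proof (intro sum.cong refl)
    fix b
    show "(\<Sum>w\<in>W. e (of_int (w * b) / real q)) * cnj (\<Sum>w\<in>W. e (of_int (w * b) / real q))
       = (\<Sum>w\<in>W. \<Sum>w'\<in>W. e (of_int ((w - w') * b) / real q))"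
      unfolding cnj_sum sum_product
    proof (intro sum.cong refl)
      fix w w'
      have "of_int (w * b) / real q + - (of_int (w' * b) / real q) = of_int ((w - w') * b) / real q"
        using q by (simp add: field_simps)
      then show "e (of_int (w * b) / real q) * cnj (e (of_int (w' * b) / real q)) = e (of_int ((w - w') * b) / real q)"
        by (metis cnj_e e_add)
    qed
  qed
  also have "\<dots> = (\<Sum>w\<in>W. \<Sum>w'\<in>W. (\<Sum>b\<in>{c..<c+int q}. e (of_int ((w - w') * b) / real q)))"
    by (simp add: sum.swap[of _ "{c..<c+int q}"])
  also have "\<dots> = (\<Sum>w\<in>W. \<Sum>w'\<in>W. (if w' = w then of_nat q else 0))"
  proof (intro sum.cong refl)
    fix w w' assume "w \<in> W" "w' \<in> W"
    then have "w \<in> {0..<int q}" "w' \<in> {0..<int q}" using W by auto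
    then have "\<bar>w - w'\<bar> < int q" by auto
    then have "int q dvd (w - w') \<longleftrightarrow> w' = w" using dvd_small_int[of "int q" "w - w'"] by auto
    then show "(\<Sum>b\<in>{c..<c+int q}. e (of_int ((w - w') * b) / real q)) = (if w' = w then of_nat q else 0)"
      by (simp only: orth[OF q])
  qed
  also have "\<dots> = of_nat q * of_nat (card W)" using fin by simp
  finally have "complex_of_real (\<Sum>b\<in>{c..<c+int q}. (cmod (\<Sum>w\<in>W. e (of_int (w * b) / real q)))\<^sup>2)
     = complex_of_real (real q * real (card W))" by simp
  then show ?thesis by (simp only: of_real_eq_iff)
qed

lemma tail_telescope:
  fixes m :: int
  assumes "m \<ge> 1"
  shows "(\<Sum>j\<in>{m<..m + int k}. 1 / (real_of_int j)\<^sup>2) \<le> 1 / real_of_int m - 1 / real_of_int (m + int k)"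
proof (induction k)
  case 0 then show ?case by simp
next
  case (Suc k)
  have set: "{m<..m + int (Suc k)} = insert (m + int k + 1) {m<..m + int k}" by auto
  have pos: "real_of_int (m + int k) > 0" using assms by simp
  have step: "1 / (real_of_int (m + int k + 1))\<^sup>2 \<le> 1 / real_of_int (m + int k) - 1 / real_of_int (m + int k + 1)"
  proof -
    define x where "x = real_of_int (m + int k)"
    have x: "x > 0" using pos x_def by simp
    have e1: "1/x - 1/(x+1) = 1/(x*(x+1))" using x by (simp add: field_simps)
    have h1: "x*(x+1) \<le> (x+1)^2" using x by (simp add: power2_eq_square algebra_simps)
    have h2: "0 < (x+1)^2 * (x*(x+1))" using x by (intro mult_pos_pos) auto
    have "1/(x+1)^2 \<le> 1/(x*(x+1))" by (rule divide_left_mono[OF h1 _ h2]) simp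
    then have "1 / (x + 1)\<^sup>2 \<le> 1 / x - 1 / (x + 1)" using e1 by simp
    then show ?thesis by (simp add: x_def)
  qed
  have "(\<Sum>j\<in>{m<..m + int (Suc k)}. 1 / (real_of_int j)\<^sup>2)
      = 1 / (real_of_int (m + int k + 1))\<^sup>2 + (\<Sum>j\<in>{m<..m + int k}. 1 / (real_of_int j)\<^sup>2)"
    unfolding set by (subst sum.insert) auto
  also have "\<dots> \<le> 1 / real_of_int m - 1 / real_of_int (m + int k + 1)"
    using Suc.IH step by linarith
  also have "m + int k + 1 = m + int (Suc k)" by simp
  finally show ?case .
qed

lemma tail_pos:
  fixes J :: "int set" and M :: nat
  assumes "finite J" "M \<ge> 1"
  shows "(\<Sum>j\<in>J. if int M < j then 1 / (real_of_int j)\<^sup>2 else 0) \<le> 1 / real M"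
proof -
  define K where "K = Max (insert (int M) J)"
  have KM: "K \<ge> int M" unfolding K_def using assms by simp
  have KJ: "\<And>j. j \<in> J \<Longrightarrow> j \<le> K" unfolding K_def using assms by simp
  define g where "g = (\<lambda>j::int. if int M < j then 1 / (real_of_int j)\<^sup>2 else 0)"
  have g0: "\<And>j. g j \<ge> 0" unfolding g_def by simp
  have "(\<Sum>j\<in>J. g j) = (\<Sum>j\<in>J \<inter> {int M<..K}. g j)"
    using assms(1) KJ by (intro sum.mono_neutral_right) (auto simp: g_def)
  also have "\<dots> \<le> (\<Sum>j\<in>{int M<..K}. g j)"
    by (intro sum_mono2 g0) auto
  also have "\<dots> = (\<Sum>j\<in>{int M<..int M + int (nat (K - int M))}. 1 / (real_of_int j)\<^sup>2)"
    using KM by (intro sum.cong) (auto simp: g_def)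
  also have "\<dots> \<le> 1 / real_of_int (int M) - 1 / real_of_int (int M + int (nat (K - int M)))"
    by (rule tail_telescope) (use assms in auto)
  also have "\<dots> \<le> 1 / real M" using assms by simp
  finally show ?thesis by (simp add: g_def)
qed

lemma tail_both:
  fixes J :: "int set" and M :: nat
  assumes "finite J" "M \<ge> 1"
  shows "(\<Sum>j\<in>J. if int M < \<bar>j\<bar> then 1 / (real_of_int j)\<^sup>2 else 0) \<le> 2 / real M"
proof -
  define g where "g = (\<lambda>j::int. if int M < j then 1 / (real_of_int j)\<^sup>2 else 0)"
  have "(\<Sum>j\<in>J. if int M < \<bar>j\<bar> then 1 / (real_of_int j)\<^sup>2 else 0) \<le> (\<Sum>j\<in>J. g j + g (- j))"
    by (intro sum_mono) (auto simp: g_def)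
  also have "\<dots> = (\<Sum>j\<in>J. g j) + (\<Sum>j\<in>uminus ` J. g j)"
    by (simp add: sum.distrib sum.reindex)
  also have "\<dots> \<le> 1 / real M + 1 / real M"
    using tail_pos[OF assms] tail_pos[of "uminus ` J" M] assms unfolding g_def
    by (intro add_mono) auto
  finally show ?thesis by simp
qed

lemma e_cong:
  assumes "q > 0" "[x = y] (mod int q)"
  shows "e (of_int x / real q) = e (of_int y / real q)"
proof -
  from assms(2) have "int q dvd (x - y)" by (simp add: cong_iff_dvd_diff)
  then obtain n where n: "x - y = int q * n" by (auto elim: dvdE)
  then have "x = y + int q * n" by simp
  then have "of_int x / real q = of_int y / real q + of_int n"
    using assms(1) by (simp add: field_simps)
  then show ?thesis by (simp add: e_period)
qed

lemma inv_modq_prop: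
  assumes "prime q" "\<not> int q dvd a"
  shows "[a * inv_modq (int q) a = 1] (mod int q) \<and> 0 \<le> inv_modq (int q) a \<and> inv_modq (int q) a < int q"
proof -
  have pq: "prime (int q)" using assms(1) by simp
  have "coprime (int q) a" by (rule prime_imp_coprime[OF pq assms(2)])
  then have "coprime a (int q)" by (simp add: coprime_commute)
  then obtain x where x: "[a * x = 1] (mod int q)" using cong_solve_coprime_int by blast
  have qpos: "int q > 0" using assms(1) prime_gt_0_nat by simp
  define y where "y = x mod int q"
  have "[a * y = a * x] (mod int q)" unfolding y_def by (intro cong_mult) (auto simp: cong_def)
  then have "[a * y = 1] (mod int q)" using x by (rule cong_trans)
  moreover have "0 \<le> y" "y < int q" using qpos by (auto simp: y_def)
  ultimately have "\<exists>y. 0 \<le> y \<and> y < int q \<and> [a * y = 1] (mod int q)" by blast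
  then have "0 \<le> inv_modq (int q) a \<and> inv_modq (int q) a < int q \<and> [a * inv_modq (int q) a = 1] (mod int q)"
    unfolding inv_modq_def by (rule someI_ex)
  then show ?thesis by blast
qed

lemma inj_affine:
  assumes "prime q" "S \<subseteq> {0..<int q}" "\<not> int q dvd m"
  shows "inj_on (\<lambda>s. (m * s + k) mod int q) S"
proof
  fix s s' assume s: "s \<in> S" "s' \<in> S" and eq: "(m * s + k) mod int q = (m * s' + k) mod int q"
  have pq: "prime (int q)" using assms(1) by simp
  from eq have "[m * s + k = m * s' + k] (mod int q)" by (simp add: cong_def)
  then have "int q dvd (m * s + k - (m * s' + k))" by (simp add: cong_iff_dvd_diff)
  then have "int q dvd m * (s - s')" by (simp add: algebra_simps)
  then have "int q dvd (s - s')" using assms(3) prime_dvd_mult_iff[OF pq] by blast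
  have "s \<in> {0..<int q}" "s' \<in> {0..<int q}" using s assms(2) by blast+
  then have "\<bar>s - s'\<bar> < int q" by auto
  moreover note \<open>int q dvd (s - s')\<close>
  ultimately have "s - s' = 0" using dvd_small_int by blast
  then show "s = s'" by simp
qed

lemma G_eq:
  assumes p: "prime q" and S: "S \<subseteq> {0..<int q}" and ih: "\<not> int q dvd (i * h)"
    and h: "\<not> int q dvd h" and ab: "[a = i * b] (mod int q)"
  shows "cmod (\<Sum>w\<in>(\<lambda>s. (i * h * s + k) mod int q) ` S. e (of_int (w * b) / real q))
       = cmod (fT ((\<lambda>s. (h * s) mod int q) ` S) (of_int a / real q))"
proof -
  have q: "q > 0" using p prime_gt_0_nat by simp
  have inj1: "inj_on (\<lambda>s. (i * h * s + k) mod int q) S" by (rule inj_affine[OF p S ih])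
  have inj2: "inj_on (\<lambda>s. (h * s) mod int q) S" using inj_affine[OF p S h, of 0] by simp
  have "(\<Sum>w\<in>(\<lambda>s. (i * h * s + k) mod int q) ` S. e (of_int (w * b) / real q))
      = (\<Sum>s\<in>S. e (of_int (((i * h * s + k) mod int q) * b) / real q))"
    by (simp add: sum.reindex[OF inj1])
  also have "\<dots> = (\<Sum>s\<in>S. e (of_int (k * b) / real q) * e (of_int (h * s * a) / real q))"
  proof (intro sum.cong refl)
    fix s
    have "[((i * h * s + k) mod int q) * b = (i * h * s + k) * b] (mod int q)"
      by (intro cong_mult) (auto simp: cong_def)
    moreover have "[(i * h * s + k) * b = k * b + h * s * (i * b)] (mod int q)"
      by (simp add: algebra_simps)
    moreover have "[k * b + h * s * (i * b) = k * b + h * s * a] (mod int q)"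
      using ab by (intro cong_add cong_mult) (auto simp: cong_sym)
    ultimately have c: "[((i * h * s + k) mod int q) * b = k * b + h * s * a] (mod int q)"
      by (meson cong_trans)
    have "of_int (k * b + h * s * a) / real q = of_int (k * b) / real q + of_int (h * s * a) / real q"
      by (simp add: add_divide_distrib)
    then show "e (of_int (((i * h * s + k) mod int q) * b) / real q)
        = e (of_int (k * b) / real q) * e (of_int (h * s * a) / real q)"
      using e_cong[OF q c] by (simp add: e_add)
  qed
  also have "\<dots> = e (of_int (k * b) / real q) * (\<Sum>s\<in>S. e (of_int (h * s * a) / real q))"
    by (simp add: sum_distrib_left)
  finally have L: "(\<Sum>w\<in>(\<lambda>s. (i * h * s + k) mod int q) ` S. e (of_int (w * b) / real q))
      = e (of_int (k * b) / real q) * (\<Sum>s\<in>S. e (of_int (h * s * a) / real q))" .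
  have "fT ((\<lambda>s. (h * s) mod int q) ` S) (of_int a / real q)
      = (\<Sum>s\<in>S. e (of_int ((h * s) mod int q) * (of_int a / real q)))"
    unfolding fT_def by (simp add: sum.reindex[OF inj2])
  also have "\<dots> = (\<Sum>s\<in>S. e (of_int (h * s * a) / real q))"
  proof (intro sum.cong refl)
    fix s
    have c: "[((h * s) mod int q) * a = h * s * a] (mod int q)"
      by (intro cong_mult) (auto simp: cong_def)
    have "of_int ((h * s) mod int q) * (of_int a / real q) = of_int (((h * s) mod int q) * a) / real q"
      by simp
    then show "e (of_int ((h * s) mod int q) * (of_int a / real q)) = e (of_int (h * s * a) / real q)"
      using e_cong[OF q c] by simp
  qed
  finally show ?thesis using L by (simp add: norm_mult)
qed

lemma card_near:
  fixes B :: "int set" and b0 :: int and M :: nat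
  shows "card {b\<in>B. \<bar>b - b0\<bar> \<le> int M} \<le> 2 * M + 1"
proof -
  have "{b\<in>B. \<bar>b - b0\<bar> \<le> int M} \<subseteq> {b0 - int M..b0 + int M}" by auto
  then have "card {b\<in>B. \<bar>b - b0\<bar> \<le> int M} \<le> card {b0 - int M..b0 + int M}"
    by (intro card_mono) auto
  also have "\<dots> = 2 * M + 1" by simp
  finally show ?thesis .
qed

lemma sum_bound:
  fixes B :: "int set" and G D :: "int \<Rightarrow> real" and b0 :: int and M :: nat and A X Y Z t :: real
  assumes fin: "finite B" and M: "M \<ge> 1" and t: "t > 0" and X: "X \<ge> 0" and Y: "Y \<ge> 0"
    and hsum: "(\<Sum>b\<in>B. (G b)\<^sup>2) = Z"
    and hP: "\<And>b. b \<in> B \<Longrightarrow> G b * D b \<le> (G b)\<^sup>2 * A + (if \<bar>b - b0\<bar> \<le> int M then X else 0)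
               + (if int M < \<bar>b - b0\<bar> then Y * (1 / (real_of_int (b - b0))\<^sup>2) else 0)"
  shows "(\<Sum>b\<in>B. G b * D b) \<le> Z * A + (2 * M + 1) * X + Y * (2 / M)"
proof -
  have "(\<Sum>b\<in>B. G b * D b) \<le> (\<Sum>b\<in>B. (G b)\<^sup>2 * A + (if \<bar>b - b0\<bar> \<le> int M then X else 0)
               + (if int M < \<bar>b - b0\<bar> then Y * (1 / (real_of_int (b - b0))\<^sup>2) else 0))"
    by (intro sum_mono hP)
  also have "\<dots> = (\<Sum>b\<in>B. (G b)\<^sup>2) * A + (\<Sum>b\<in>B. (if \<bar>b - b0\<bar> \<le> int M then X else 0))
       + Y * (\<Sum>b\<in>B. (if int M < \<bar>b - b0\<bar> then 1 / (real_of_int (b - b0))\<^sup>2 else 0))"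
  proof -
    have "(\<Sum>b\<in>B. (if int M < \<bar>b - b0\<bar> then Y * (1 / (real_of_int (b - b0))\<^sup>2) else 0))
        = Y * (\<Sum>b\<in>B. (if int M < \<bar>b - b0\<bar> then 1 / (real_of_int (b - b0))\<^sup>2 else 0))"
      unfolding sum_distrib_left by (intro sum.cong) auto
    then show ?thesis by (simp add: sum.distrib sum_distrib_right)
  qed
  also have "(\<Sum>b\<in>B. (if \<bar>b - b0\<bar> \<le> int M then X else 0)) = real (card {b\<in>B. \<bar>b - b0\<bar> \<le> int M}) * X"
    using fin by (simp add: sum.If_cases Int_def conj_commute)
  also have "\<dots> \<le> (2 * M + 1) * X"
  proof -
    have "real (card {b\<in>B. \<bar>b - b0\<bar> \<le> int M}) \<le> real (2 * M + 1)"
      using card_near[of B b0 M] by linarith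
    then show ?thesis using X by (intro mult_right_mono) auto
  qed
  also have "(\<Sum>b\<in>B. (if int M < \<bar>b - b0\<bar> then 1 / (real_of_int (b - b0))\<^sup>2 else 0))
      = (\<Sum>j\<in>(\<lambda>b. b - b0) ` B. (if int M < \<bar>j\<bar> then 1 / (real_of_int j)\<^sup>2 else 0))"
    by (subst sum.reindex) (auto simp: inj_on_def)
  also have "\<dots> \<le> 2 / M"
    using fin M by (intro tail_both) auto
  finally show ?thesis
    using hsum Y by (auto intro: mult_left_mono)
qed

lemma large_x_bound:
  fixes Q u \<delta> :: real and v a m :: int
  assumes Q: "Q > 0" and v: "v \<ge> 1" and u1: "5 * real_of_int v * Q powr (-\<delta>) \<le> \<bar>u\<bar>" and u2: "\<bar>u\<bar> \<le> 1/2"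
    and a: "\<bar>real_of_int a\<bar> < Q powr (1 - \<delta>)"
    and x: "\<bar>u - (of_int (4 * v * a) / Q + of_int m)\<bar> \<le> 1/2"
  shows "real_of_int v * Q powr (-\<delta>) \<le> \<bar>u - (of_int (4 * v * a) / Q + of_int m)\<bar>"
proof -
  define P where "P = Q powr (-\<delta>)"
  have P: "P > 0" using Q by (simp add: P_def)
  have "Q powr (1 - \<delta>) = Q powr (1 + (-\<delta>))" by simp
  also have "\<dots> = Q powr 1 * Q powr (-\<delta>)" by (rule powr_add)
  also have "\<dots> = Q * P" using Q by (simp add: P_def)
  finally have "\<bar>real_of_int a\<bar> < Q * P" using a by simp
  then have "\<bar>real_of_int a\<bar> / Q < P" using Q by (simp add: field_simps)
  moreover have "\<bar>of_int (4 * v * a) / Q\<bar> = 4 * of_int v * (\<bar>real_of_int a\<bar> / Q)"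
    using Q v by (simp add: abs_mult)
  moreover have "4 * of_int v * (\<bar>real_of_int a\<bar> / Q) \<le> 4 * of_int v * P"
    using v calculation(1) by (intro mult_left_mono) auto
  ultimately have r: "\<bar>of_int (4 * v * a) / Q\<bar> \<le> 4 * of_int v * P"
    by linarith
  define rr where "rr = of_int (4 * v * a) / Q"
  define vP where "vP = of_int v * P"
  have r': "\<bar>rr\<bar> \<le> 4 * vP" using r unfolding rr_def vP_def by (simp add: mult.assoc)
  have u1': "5 * vP \<le> \<bar>u\<bar>" using u1 unfolding vP_def P_def by (simp add: mult.assoc)
  define y where "y = u - rr"
  have y1: "\<bar>y\<bar> \<ge> vP" using u1' r' abs_triangle_ineq2[of u rr] unfolding y_def by linarith
  have y2: "\<bar>y\<bar> \<le> 1/2 + 4 * vP" using u2 r' abs_triangle_ineq4[of u rr] unfolding y_def by linarith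
  have eq: "u - (of_int (4 * v * a) / Q + of_int m) = y - of_int m" unfolding y_def rr_def by simp
  show ?thesis
  proof (cases "m = 0")
    case True then show ?thesis using y1 eq by (simp add: P_def vP_def)
  next
    case False
    then have "1 \<le> \<bar>m\<bar>" by linarith
    then have "1 \<le> \<bar>real_of_int m\<bar>" by (metis of_int_1_le_iff of_int_abs)
    then have "\<bar>y - of_int m\<bar> \<ge> 1 - \<bar>y\<bar>" using abs_triangle_ineq2_sym[of "real_of_int m" y] by linarith
    moreover have "5 * vP \<le> 1/2" using u1' u2 by linarith
    ultimately have "vP \<le> \<bar>y - of_int m\<bar>" using y2 by linarith
    then show ?thesis using eq unfolding vP_def P_def by simp
  qed
qed


lemma core:
  fixes q :: nat and S :: "int set" and h k v :: int and u \<epsilon> \<rho> t \<delta> :: real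
  assumes p: "prime q" and q3: "q \<ge> 3"
    and \<rho>: "0 < \<rho>" "\<rho> \<le> 1" and \<epsilon>: "0 < \<epsilon>" and t: "t > 0" "t \<le> 1/2" "\<epsilon> = \<rho> * t^3"
    and \<delta>: "0 < \<delta>" "\<delta> < 1"
    and Qbig: "real q powr \<delta> \<le> 2 * \<epsilon> * \<rho> * t * real q"
    and S: "S \<subseteq> {0..<int q}" "real (card S) \<ge> \<rho> * real q"
    and h: "1 \<le> h" "h \<le> int q - 1"
    and four: "\<forall>a::int. \<bar>real_of_int a\<bar> \<le> real q / 2 \<and>
              cmod (fT ((\<lambda>s. (h * s) mod int q) ` S) (real_of_int a / real q))
                > \<epsilon> * real (card S)
            \<longrightarrow> \<bar>real_of_int a\<bar> < real q powr (1 - \<delta>)"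
    and v: "1 \<le> v" "real_of_int v < real q powr (\<delta> / 4)"
    and u: "5 * real_of_int v * real q powr (- \<delta>) \<le> \<bar>u\<bar>" "\<bar>u\<bar> \<le> 1 / 2"
  shows "cmod (fT (W (int q) S h k v) u) < 2 * pi * t * real (card S)"
proof -
  define Q where "Q = real q"
  have Q3: "Q \<ge> 3" using q3 by (simp add: Q_def)
  have q0: "q > 0" using q3 by simp
  have pq: "prime (int q)" using p by simp
  have vq: "v < int q"
  proof -
    have "real q powr (\<delta> / 4) \<le> real q powr 1"
      using q3 \<delta> by (intro powr_mono) auto
    then show ?thesis using v(2) q3 by simp
  qed
  have n4v: "\<not> int q dvd (4 * v)"
  proof
    assume "int q dvd (4 * v)"
    then have "int q dvd 4 \<or> int q dvd v" using prime_dvd_mult_iff[OF pq] by blast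
    moreover have "\<not> int q dvd 4"
    proof
      assume "int q dvd 4"
      then have "int q dvd 2 * 2" by simp
      then have "int q dvd 2" using prime_dvd_mult_iff[OF pq] by blast
      then have "int q \<le> 2" by (rule zdvd_imp_le) simp
      then show False using q3 by simp
    qed
    moreover have "\<not> int q dvd v"
    proof
      assume "int q dvd v"
      then have "int q \<le> v" using v(1) by (intro zdvd_imp_le) auto
      then show False using vq by simp
    qed
    ultimately show False by blast
  qed
  define i where "i = inv_modq (int q) (4 * v)"
  have i: "[4 * v * i = 1] (mod int q)" "0 \<le> i" "i < int q"
    using inv_modq_prop[OF p n4v] unfolding i_def by auto
  have nh: "\<not> int q dvd h"
  proof
    assume "int q dvd h"
    then have "int q \<le> h" using h by (intro zdvd_imp_le) auto
    then show False using h by simp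
  qed
  have nih: "\<not> int q dvd (i * h)"
  proof
    assume "int q dvd (i * h)"
    then have "int q dvd i" using nh prime_dvd_mult_iff[OF pq] by blast
    then have "int q dvd 4 * v * i" by simp
    then have "[4 * v * i = 0] (mod int q)" by (simp add: cong_0_iff)
    then have "[1 = 0] (mod int q)" using i(1) by (meson cong_sym cong_trans)
    then have "int q dvd 1" by (simp add: cong_0_iff cong_sym_eq)
    then show False using q3 by simp
  qed
  define W' where "W' = (\<lambda>s. (i * h * s + k) mod int q) ` S"
  have Weq: "W (int q) S h k v = W'" unfolding W_def W'_def i_def by simp
  have Wsub: "W' \<subseteq> {0..<int q}" unfolding W'_def using q0 by auto
  have cardW: "card W' = card S" unfolding W'_def
    by (rule card_image[OF inj_affine[OF p S(1) nih]])
  define Sz where "Sz = real (card S)"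
  have Sz: "Sz > 0" using S(2) \<rho> q3 unfolding Sz_def
    by (smt (verit) of_nat_0_less_iff mult_pos_pos q0)
  have Qpos: "Q > 0" using Q3 by simp
  have qodd: "odd q" using prime_odd_nat[OF p] q3 by simp
  define c where "c = (int q - 1) div 2"
  have qc: "int q = 2 * c + 1"
  proof -
    from qodd obtain m where "q = 2 * m + 1" by (auto elim: oddE)
    then show ?thesis unfolding c_def by simp
  qed
  have c0: "c \<ge> 0" using q3 qc by simp
  define b0 where "b0 = \<lfloor>Q * u + 1/2\<rfloor>"
  define B where "B = {b0 - c..<b0 - c + int q}"
  have finB: "finite B" unfolding B_def by simp
  define G where "G = (\<lambda>b. cmod (\<Sum>w\<in>W'. e (of_int (w * b) / real q)))"
  define Dn where "Dn = (\<lambda>b. cmod (\<Sum>n<q. e (real n * (u - of_int b / real q))))"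
  have f_le: "cmod (fT W' u) \<le> (1 / Q) * (\<Sum>b\<in>B. G b * Dn b)"
  proof -
    have "fT W' u = (1 / of_nat q) * (\<Sum>b\<in>B.
            (\<Sum>w\<in>W'. e (of_int (w * b) / real q)) * (\<Sum>n<q. e (real n * (u - of_int b / real q))))"
      unfolding B_def by (rule inversion[OF q0 Wsub])
    then have "cmod (fT W' u) = (1 / Q) * cmod (\<Sum>b\<in>B.
            (\<Sum>w\<in>W'. e (of_int (w * b) / real q)) * (\<Sum>n<q. e (real n * (u - of_int b / real q))))"
      by (simp add: norm_mult Q_def norm_divide)
    also have "\<dots> \<le> (1 / Q) * (\<Sum>b\<in>B. G b * Dn b)"
      using Qpos unfolding G_def Dn_def
      by (intro mult_left_mono order.trans[OF norm_sum] sum_mono) (auto simp: norm_mult)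
    finally show ?thesis .
  qed
  have pars: "(\<Sum>b\<in>B. (G b)\<^sup>2) = Q * Sz"
    unfolding G_def B_def Q_def Sz_def using parseval[OF q0 Wsub] cardW by simp
  have geo: "\<bar>u - of_int b / Q\<bar> \<le> 1/2 \<and> (b \<noteq> b0 \<longrightarrow> \<bar>u - of_int b / Q\<bar> \<ge> \<bar>real_of_int (b - b0)\<bar> / (2 * Q))"
    if bB: "b \<in> B" for b
  proof -
    have j: "\<bar>b - b0\<bar> \<le> c" using bB qc unfolding B_def by auto
    have fl: "of_int b0 \<le> Q * u + 1/2" "Q * u + 1/2 < of_int b0 + 1"
      unfolding b0_def by linarith+
    define \<theta> where "\<theta> = Q * u - of_int b0"
    have th: "\<bar>\<theta>\<bar> \<le> 1/2" using fl unfolding \<theta>_def by linarith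
    have xe: "u - of_int b / Q = (\<theta> - of_int (b - b0)) / Q" unfolding \<theta>_def using Qpos
      by (simp add: field_simps)
    have Qc: "Q = 2 * of_int c + 1" using qc unfolding Q_def by (metis of_int_of_nat_eq of_int_add of_int_mult of_int_1 of_int_numeral)
    have jr: "\<bar>real_of_int (b - b0)\<bar> \<le> of_int c" using j by linarith
    have "\<bar>\<theta> - of_int (b - b0)\<bar> \<le> Q / 2"
    proof -
      define J where "J = real_of_int (b - b0)"
      have "\<bar>\<theta> - J\<bar> \<le> Q / 2" using th jr Qc
        using abs_triangle_ineq4[of \<theta> J] unfolding J_def[symmetric] by linarith
      then show ?thesis unfolding J_def .
    qed
    then have A1: "\<bar>u - of_int b / Q\<bar> \<le> 1/2" unfolding xe using Qpos by (simp add: field_simps abs_divide)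
    have A2: "\<bar>u - of_int b / Q\<bar> \<ge> \<bar>real_of_int (b - b0)\<bar> / (2 * Q)" if ne: "b \<noteq> b0"
    proof -
      have "1 \<le> \<bar>b - b0\<bar>" using ne by linarith
      then have J1: "1 \<le> \<bar>real_of_int (b - b0)\<bar>" by (metis of_int_1_le_iff of_int_abs)
      define J where "J = real_of_int (b - b0)"
      have "\<bar>J\<bar> / 2 \<le> \<bar>\<theta> - J\<bar>"
        using th J1 abs_triangle_ineq2_sym[of J \<theta>] unfolding J_def[symmetric] by linarith
      then have "\<bar>real_of_int (b - b0)\<bar> / 2 \<le> \<bar>\<theta> - of_int (b - b0)\<bar>" unfolding J_def .
      then show ?thesis unfolding xe using Qpos by (simp add: field_simps abs_divide)
    qed
    show ?thesis using A1 A2 by blast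
  qed
  define M where "M = nat \<lceil>1 / (\<rho> * t\<^sup>2)\<rceil>"
  have rt: "1 / (\<rho> * t\<^sup>2) > 0" using \<rho> t by simp
  have M1: "M \<ge> 1" unfolding M_def using rt by linarith
  have Mge: "real M \<ge> 1 / (\<rho> * t\<^sup>2)" unfolding M_def by linarith
  have Mle: "real M \<le> 1 / (\<rho> * t\<^sup>2) + 1" unfolding M_def using rt by linarith
  define A where "A = Q powr \<delta> / (2 * \<epsilon> * Sz) + t / 2"
  have Apos: "A \<ge> 0" unfolding A_def using \<epsilon> Sz t by simp
  have G0: "\<And>b. G b \<ge> 0" unfolding G_def by simp
  have D0: "\<And>b. Dn b \<ge> 0" unfolding Dn_def by simp
  have pw: "G b * Dn b \<le> (G b)\<^sup>2 * A + (if \<bar>b - b0\<bar> \<le> int M then \<epsilon> * Sz * Q else 0)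
               + (if int M < \<bar>b - b0\<bar> then Q\<^sup>2 / (2 * t) * (1 / (real_of_int (b - b0))\<^sup>2) else 0)"
    if bB: "b \<in> B" for b
  proof -
    have T2: "0 \<le> (if int M < \<bar>b - b0\<bar> then Q\<^sup>2 / (2 * t) * (1 / (real_of_int (b - b0))\<^sup>2) else 0)"
      using t by simp
    have T1: "0 \<le> (if \<bar>b - b0\<bar> \<le> int M then \<epsilon> * Sz * Q else 0)"
      using \<epsilon> Sz Qpos by simp
    have A1: "(G b)\<^sup>2 * (Q powr \<delta> / (2 * \<epsilon> * Sz)) \<le> (G b)\<^sup>2 * A"
      unfolding A_def using t by (intro mult_left_mono) auto
    have A2: "(G b)\<^sup>2 * (t / 2) \<le> (G b)\<^sup>2 * A"
      unfolding A_def using \<epsilon> Sz by (intro mult_left_mono) auto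
    show ?thesis
    proof (cases "G b > \<epsilon> * Sz")
      case True
      define a where "a = (i * b + c) mod int q - c"
      have a_cong: "[a = i * b] (mod int q)"
      proof -
        have "[(i * b + c) mod int q - c = (i * b + c) - c] (mod int q)"
          by (intro cong_diff) (auto simp: cong_def)
        then show ?thesis unfolding a_def by simp
      qed
      have amod: "0 \<le> (i * b + c) mod int q" "(i * b + c) mod int q < int q" using q0 by auto
      have aabs: "\<bar>a\<bar> \<le> c" using amod qc unfolding a_def by linarith
      have "real_of_int \<bar>a\<bar> \<le> real_of_int c" using aabs by linarith
      moreover have "real_of_int c \<le> Q / 2" using qc unfolding Q_def by linarith
      ultimately have aQ: "\<bar>real_of_int a\<bar> \<le> real q / 2" unfolding Q_def by simp
      have Geq: "G b = cmod (fT ((\<lambda>s. (h * s) mod int q) ` S) (real_of_int a / real q))"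
        unfolding G_def W'_def by (rule G_eq[OF p S(1) nih nh a_cong])
      have "cmod (fT ((\<lambda>s. (h * s) mod int q) ` S) (real_of_int a / real q)) > \<epsilon> * real (card S)"
        using True Geq unfolding Sz_def by simp
      then have alt: "\<bar>real_of_int a\<bar> < Q powr (1 - \<delta>)" using four aQ unfolding Q_def by blast
      have "[4 * v * a = 4 * v * (i * b)] (mod int q)" using a_cong by (intro cong_mult) auto
      moreover have "[4 * v * (i * b) = 1 * b] (mod int q)"
      proof -
        have "[4 * v * i * b = 1 * b] (mod int q)" by (rule cong_scalar_right[OF i(1)])
        then show ?thesis by (simp add: mult.assoc)
      qed
      ultimately have "[4 * v * a = 1 * b] (mod int q)" by (rule cong_trans)
      then have "[b = 4 * v * a] (mod int q)" by (simp add: cong_sym_eq)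
      then have "int q dvd (b - 4 * v * a)" by (simp add: cong_iff_dvd_diff)
      then obtain m where m: "b - 4 * v * a = int q * m" by (auto elim: dvdE)
      have bQ: "of_int b / Q = of_int (4 * v * a) / Q + of_int m"
      proof -
        have "b = 4 * v * a + int q * m" using m by simp
        then have "real_of_int b = of_int (4 * v * a) + Q * of_int m" unfolding Q_def by simp
        then show ?thesis using Qpos by (simp add: field_simps)
      qed
      define x where "x = u - of_int b / Q"
      have xh: "\<bar>x\<bar> \<le> 1/2" using geo[OF bB] unfolding x_def by auto
      have u1: "5 * real_of_int v * Q powr (- \<delta>) \<le> \<bar>u\<bar>" using u(1) unfolding Q_def .
      have xl: "real_of_int v * Q powr (-\<delta>) \<le> \<bar>x\<bar>"
        using large_x_bound[OF Qpos v(1) u1 u(2) alt, of m] xh unfolding x_def bQ by simp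
      have Pp: "Q powr (-\<delta>) > 0" using Qpos by simp
      have "Q powr (-\<delta>) \<le> real_of_int v * Q powr (-\<delta>)" using v(1) Pp by simp
      then have xl2: "Q powr (-\<delta>) \<le> \<bar>x\<bar>" using xl by linarith
      then have xpos: "\<bar>x\<bar> > 0" using Pp by linarith
      have "Dn b \<le> 1 / (2 * \<bar>x\<bar>)" unfolding Dn_def Q_def[symmetric] x_def[symmetric]
        by (rule Dsum_bound[OF xpos xh])
      also have "\<dots> \<le> 1 / (2 * Q powr (-\<delta>))"
        using xl2 Pp by (intro divide_left_mono mult_left_mono mult_pos_pos) auto
      also have "\<dots> = Q powr \<delta> / 2" using Qpos by (simp add: powr_minus field_simps)
      finally have Db: "Dn b \<le> Q powr \<delta> / 2" .
      have "\<epsilon> * Sz > 0" using \<epsilon> Sz by simp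
      then have Gp: "G b > 0" using True by linarith
      have "G b * Dn b \<le> G b * (Q powr \<delta> / 2)" using Db Gp by (intro mult_left_mono) auto
      also have "\<dots> \<le> (G b)\<^sup>2 * (Q powr \<delta> / (2 * \<epsilon> * Sz))"
      proof -
        have es: "\<epsilon> * Sz > 0" using \<epsilon> Sz by simp
        have "G b * (Q powr \<delta> / 2) * (\<epsilon> * Sz) \<le> G b * (Q powr \<delta> / 2) * G b"
          using True Gp by (intro mult_left_mono) auto
        then have "G b * (Q powr \<delta> / 2) \<le> G b * (Q powr \<delta> / 2) * G b / (\<epsilon> * Sz)"
          using es by (simp add: field_simps)
        also have "\<dots> = (G b)\<^sup>2 * (Q powr \<delta> / (2 * \<epsilon> * Sz))"
          using es by (simp add: field_simps power2_eq_square)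
        finally show ?thesis .
      qed
      finally show ?thesis using A1 T1 T2 by linarith
    next
      case False
      show ?thesis
      proof (cases "\<bar>b - b0\<bar> \<le> int M")
        case True
        have "Dn b \<le> Q" unfolding Dn_def Q_def by (rule Dsum_triv)
        then have "G b * Dn b \<le> (\<epsilon> * Sz) * Q" using False G0 D0 \<epsilon> Sz by (intro mult_mono) auto
        moreover have "0 \<le> (G b)\<^sup>2 * A" using Apos by simp
        ultimately show ?thesis using True T2 by simp
      next
        case far: False
        then have ne: "b \<noteq> b0" by auto
        define x where "x = u - of_int b / Q"
        have x1: "\<bar>x\<bar> \<le> 1/2" "\<bar>x\<bar> \<ge> \<bar>real_of_int (b - b0)\<bar> / (2 * Q)"
          using geo[OF bB] ne unfolding x_def by auto
        have jpos: "\<bar>real_of_int (b - b0)\<bar> > 0" using ne by simp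
        have "\<bar>real_of_int (b - b0)\<bar> / (2 * Q) > 0" using jpos Qpos by simp
        then have xpos: "\<bar>x\<bar> > 0" using x1(2) by linarith
        have "Dn b \<le> 1 / (2 * \<bar>x\<bar>)" unfolding Dn_def Q_def[symmetric] x_def[symmetric]
          by (rule Dsum_bound[OF xpos x1(1)])
        also have "\<dots> \<le> 1 / (2 * (\<bar>real_of_int (b - b0)\<bar> / (2 * Q)))"
          using x1(2) jpos Qpos xpos by (intro divide_left_mono mult_left_mono mult_pos_pos) auto
        also have "\<dots> = Q / \<bar>real_of_int (b - b0)\<bar>" using Qpos jpos by (simp add: field_simps)
        finally have Db: "Dn b \<le> Q / \<bar>real_of_int (b - b0)\<bar>" .
        then have "(Dn b)\<^sup>2 \<le> (Q / \<bar>real_of_int (b - b0)\<bar>)\<^sup>2" using D0 by (intro power_mono) auto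
        also have "\<dots> = Q\<^sup>2 * (1 / (real_of_int (b - b0))\<^sup>2)" by (simp add: power_divide)
        finally have D2: "(Dn b)\<^sup>2 \<le> Q\<^sup>2 * (1 / (real_of_int (b - b0))\<^sup>2)" .
        have amgm: "G b * Dn b \<le> (G b)\<^sup>2 * (t / 2) + (Dn b)\<^sup>2 / (2 * t)"
        proof -
          have "0 \<le> (t * G b - Dn b)\<^sup>2 / (2 * t)" using t by simp
          also have "(t * G b - Dn b)\<^sup>2 / (2 * t) = (G b)\<^sup>2 * (t / 2) + (Dn b)\<^sup>2 / (2 * t) - G b * Dn b"
            using t by (simp add: field_simps power2_eq_square)
          finally show ?thesis by simp
        qed
        have "(Dn b)\<^sup>2 / (2 * t) \<le> (Q\<^sup>2 * (1 / (real_of_int (b - b0))\<^sup>2)) / (2 * t)"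
          using D2 t by (intro divide_right_mono) auto
        also have "\<dots> = Q\<^sup>2 / (2 * t) * (1 / (real_of_int (b - b0))\<^sup>2)"
          by (rule times_divide_eq_left[symmetric])
        finally have "(Dn b)\<^sup>2 / (2 * t) \<le> Q\<^sup>2 / (2 * t) * (1 / (real_of_int (b - b0))\<^sup>2)" .
        then have "G b * Dn b \<le> (G b)\<^sup>2 * A + Q\<^sup>2 / (2 * t) * (1 / (real_of_int (b - b0))\<^sup>2)"
          using amgm A2 by linarith
        then show ?thesis using far by simp
      qed
    qed
  qed
  have X0: "\<epsilon> * Sz * Q \<ge> 0" using \<epsilon> Sz Qpos by simp
  have Y0: "Q\<^sup>2 / (2 * t) \<ge> 0" using t by simp
  have sb: "(\<Sum>b\<in>B. G b * Dn b) \<le> (Q * Sz) * A + (2 * real M + 1) * (\<epsilon> * Sz * Q) + Q\<^sup>2 / (2 * t) * (2 / real M)"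
    using sum_bound[OF finB M1 t(1) X0 Y0 pars pw] by (simp add: algebra_simps)
  have fle: "cmod (fT W' u) \<le> (1 / Q) * ((Q * Sz) * A + (2 * real M + 1) * (\<epsilon> * Sz * Q) + Q\<^sup>2 / (2 * t) * (2 / real M))"
  proof -
    have "(1 / Q) * (\<Sum>b\<in>B. G b * Dn b) \<le> (1 / Q) * ((Q * Sz) * A + (2 * real M + 1) * (\<epsilon> * Sz * Q) + Q\<^sup>2 / (2 * t) * (2 / real M))"
      using sb Qpos by (intro mult_left_mono) auto
    then show ?thesis using f_le by linarith
  qed
  have Mpos: "real M > 0" using M1 by simp
  have E: "(1 / Q) * ((Q * Sz) * A + (2 * real M + 1) * (\<epsilon> * Sz * Q) + Q\<^sup>2 / (2 * t) * (2 / real M))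
      = Q powr \<delta> / (2 * \<epsilon>) + t * Sz / 2 + (2 * real M + 1) * \<epsilon> * Sz + Q / (t * real M)"
    unfolding A_def using Qpos Sz \<epsilon> t Mpos by (simp add: field_simps power2_eq_square)
  have rQ: "\<rho> * Q \<le> Sz" using S(2) unfolding Sz_def Q_def by simp
  have B1: "Q powr \<delta> / (2 * \<epsilon>) \<le> t * Sz"
  proof -
    have "Q powr \<delta> / (2 * \<epsilon>) \<le> (2 * \<epsilon> * \<rho> * t * Q) / (2 * \<epsilon>)"
      using Qbig \<epsilon> unfolding Q_def by (intro divide_right_mono) auto
    also have "\<dots> = t * (\<rho> * Q)" using \<epsilon> by simp
    also have "\<dots> \<le> t * Sz" using rQ t by (intro mult_left_mono) auto
    finally show ?thesis .
  qed
  have t3: "t^3 \<le> t / 4"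
  proof -
    have "t^2 \<le> (1/2)^2" using t by (intro power_mono) auto
    then have "t * t^2 \<le> t * (1/4)" using t by (intro mult_left_mono) (auto simp: power2_eq_square)
    then show ?thesis by (simp add: power3_eq_cube power2_eq_square)
  qed
  have B2: "(2 * real M + 1) * \<epsilon> \<le> 2 * t + 3 * t / 4"
  proof -
    have "(2 * real M + 1) * \<epsilon> \<le> (2 * (1 / (\<rho> * t\<^sup>2) + 1) + 1) * \<epsilon>"
      using Mle \<epsilon> by (intro mult_right_mono) auto
    also have "\<dots> = 2 * t + 3 * (\<rho> * t^3)"
      unfolding t(3) using \<rho> t by (simp add: field_simps power2_eq_square power3_eq_cube)
    also have "\<dots> \<le> 2 * t + 3 * t / 4"
    proof -
      have "\<rho> * t^3 \<le> 1 * t^3" using \<rho> t by (intro mult_right_mono) auto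
      then show ?thesis using t3 by linarith
    qed
    finally show ?thesis .
  qed
  have B3: "Q / (t * real M) \<le> t * Sz"
  proof -
    have "1 / real M \<le> \<rho> * t\<^sup>2"
    proof -
      have "1 / real M \<le> 1 / (1 / (\<rho> * t\<^sup>2))" using Mge rt Mpos by (intro divide_left_mono mult_pos_pos) auto
      then show ?thesis by simp
    qed
    then have "Q / t * (1 / real M) \<le> Q / t * (\<rho> * t\<^sup>2)" using Qpos t by (intro mult_left_mono) auto
    moreover have "Q / t * (1 / real M) = Q / (t * real M)" by simp
    moreover have "Q / t * (\<rho> * t\<^sup>2) = t * (\<rho> * Q)" using t by (simp add: field_simps power2_eq_square)
    ultimately have "Q / (t * real M) \<le> t * (\<rho> * Q)" by simp
    also have "\<dots> \<le> t * Sz" using rQ t by (intro mult_left_mono) auto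
    finally show ?thesis .
  qed
  have "cmod (fT W' u) \<le> t * Sz + t * Sz / 2 + (2 * t + 3 * t / 4) * Sz + t * Sz"
  proof -
    have "(2 * real M + 1) * \<epsilon> * Sz \<le> (2 * t + 3 * t / 4) * Sz" using B2 Sz by (intro mult_right_mono) auto
    then show ?thesis using fle E B1 B3 by linarith
  qed
  also have "\<dots> < 2 * pi * t * Sz"
  proof -
    have tS: "t * Sz > 0" using t Sz by simp
    have "3 * (t * Sz) < pi * (t * Sz)" by (rule mult_strict_right_mono[OF pi_gt3 tS])
    moreover have "t * Sz + t * Sz / 2 + (2 * t + 3 * t / 4) * Sz + t * Sz = (21/4) * (t * Sz)"
      by (simp add: algebra_simps)
    moreover have "2 * pi * t * Sz = 2 * (pi * (t * Sz))" by simp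
    ultimately show ?thesis using tS by linarith
  qed
  finally show ?thesis unfolding Weq Sz_def .
qed


theorem proposition3:
  fixes \<rho>\<^sub>1 :: real
  assumes "0 < \<rho>\<^sub>1" "\<rho>\<^sub>1 < 1"
  shows "\<exists>\<epsilon>\<^sub>0::real. 0 < \<epsilon>\<^sub>0 \<and> \<epsilon>\<^sub>0 < 1 \<and>
    (\<forall>\<epsilon>::real. 0 < \<epsilon> \<and> \<epsilon> < \<epsilon>\<^sub>0 \<longrightarrow>
      (\<exists>q\<^sub>0::nat. \<forall>q::nat. prime q \<and> q \<ge> q\<^sub>0 \<longrightarrow>
        (\<forall>S::int set. \<forall>h::int. \<forall>k::int. \<forall>v::int.
          S \<subseteq> {0..<int q} \<and> real (card S) \<ge> \<rho>\<^sub>1 * real q \<and>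
          1 \<le> h \<and> h \<le> int q - 1 \<and>
          (\<forall>a::int. \<bar>real_of_int a\<bar> \<le> real q / 2 \<and>
              cmod (fT ((\<lambda>s. (h * s) mod int q) ` S) (real_of_int a / real q))
                > \<epsilon> * real (card S)
            \<longrightarrow> \<bar>real_of_int a\<bar> < real q powr (1 - \<rho>\<^sub>1 * \<epsilon>\<^sup>2)) \<and>
          1 \<le> v \<and> real_of_int v < real q powr (\<rho>\<^sub>1 * \<epsilon>\<^sup>2 / 4)
          \<longrightarrow> (\<forall>u::real. 5 * real_of_int v * real q powr (- (\<rho>\<^sub>1 * \<epsilon>\<^sup>2)) \<le> \<bar>u\<bar>
                  \<and> \<bar>u\<bar> \<le> 1 / 2 \<longrightarrow>
                cmod (fT (W (int q) S h k v) u)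
                  < 2 * pi * (\<epsilon> / \<rho>\<^sub>1) powr (1 / 3) * real (card S)))))"
proof -
  define \<epsilon>\<^sub>0 where "\<epsilon>\<^sub>0 = \<rho>\<^sub>1 / 8"
  have e0: "0 < \<epsilon>\<^sub>0" "\<epsilon>\<^sub>0 < 1" using assms unfolding \<epsilon>\<^sub>0_def by auto
  have main: "\<exists>q\<^sub>0::nat. \<forall>q::nat. prime q \<and> q \<ge> q\<^sub>0 \<longrightarrow>
        (\<forall>S::int set. \<forall>h::int. \<forall>k::int. \<forall>v::int.
          S \<subseteq> {0..<int q} \<and> real (card S) \<ge> \<rho>\<^sub>1 * real q \<and>
          1 \<le> h \<and> h \<le> int q - 1 \<and>
          (\<forall>a::int. \<bar>real_of_int a\<bar> \<le> real q / 2 \<and>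
              cmod (fT ((\<lambda>s. (h * s) mod int q) ` S) (real_of_int a / real q))
                > \<epsilon> * real (card S)
            \<longrightarrow> \<bar>real_of_int a\<bar> < real q powr (1 - \<rho>\<^sub>1 * \<epsilon>\<^sup>2)) \<and>
          1 \<le> v \<and> real_of_int v < real q powr (\<rho>\<^sub>1 * \<epsilon>\<^sup>2 / 4)
          \<longrightarrow> (\<forall>u::real. 5 * real_of_int v * real q powr (- (\<rho>\<^sub>1 * \<epsilon>\<^sup>2)) \<le> \<bar>u\<bar>
                  \<and> \<bar>u\<bar> \<le> 1 / 2 \<longrightarrow>
                cmod (fT (W (int q) S h k v) u)
                  < 2 * pi * (\<epsilon> / \<rho>\<^sub>1) powr (1 / 3) * real (card S)))"
    if \<epsilon>: "0 < \<epsilon>" "\<epsilon> < \<epsilon>\<^sub>0" for \<epsilon> :: real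
  proof -
    have r: "0 < \<rho>\<^sub>1" "\<rho>\<^sub>1 < 1" using assms by auto
    define t where "t = (\<epsilon> / \<rho>\<^sub>1) powr (1 / 3)"
    have er: "\<epsilon> / \<rho>\<^sub>1 > 0" using \<epsilon> r by simp
    have tpos: "t > 0" unfolding t_def using er \<epsilon> r by simp
    have t3: "t ^ 3 = \<epsilon> / \<rho>\<^sub>1"
    proof -
      have "t ^ 3 = t powr (real 3)" using tpos by (simp add: powr_realpow)
      also have "\<dots> = (\<epsilon> / \<rho>\<^sub>1) powr (1 / 3 * 3)" unfolding t_def by (simp add: powr_powr)
      also have "\<dots> = \<epsilon> / \<rho>\<^sub>1" using er \<epsilon> r by simp
      finally show ?thesis .
    qed
    have teps: "\<epsilon> = \<rho>\<^sub>1 * t ^ 3" using t3 r by (simp add: field_simps)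
    have e8: "\<epsilon> / \<rho>\<^sub>1 < 1 / 8" using \<epsilon> r unfolding \<epsilon>\<^sub>0_def by (simp add: field_simps)
    have h8: "(1/2::real) ^ 3 = 1 / 8" by (simp add: power3_eq_cube)
    have "t ^ 3 < (1/2) ^ 3" using e8 by (simp only: t3 h8)
    then have thalf: "t < 1/2" using power_less_imp_less_base[of t 3 "1/2"] by simp
    define \<delta> where "\<delta> = \<rho>\<^sub>1 * \<epsilon>\<^sup>2"
    have d0: "0 < \<delta>" unfolding \<delta>_def using r \<epsilon> by simp
    have e1: "\<epsilon> < 1" using \<epsilon> e0 by simp
    have d1: "\<delta> < 1"
    proof -
      have "\<epsilon>\<^sup>2 < 1" using \<epsilon> e1 by (simp add: power_less_one_iff abs_less_iff power2_less_1_iff)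
      then have "\<rho>\<^sub>1 * \<epsilon>\<^sup>2 < 1 * 1" using r by (intro mult_strict_mono) auto
      then show ?thesis unfolding \<delta>_def by simp
    qed
    define X where "X = 1 / (2 * \<epsilon> * \<rho>\<^sub>1 * t)"
    have Xpos: "X > 0" unfolding X_def using \<epsilon> r tpos by simp
    define q\<^sub>0 where "q\<^sub>0 = max 3 (nat \<lceil>X powr (1 / (1 - \<delta>))\<rceil>)"
    show ?thesis
    proof (rule exI[of _ q\<^sub>0], rule allI, rule impI)
      fix q :: nat
      assume qa: "prime q \<and> q\<^sub>0 \<le> q"
      have q3: "q \<ge> 3" using qa unfolding q\<^sub>0_def by simp
      have qX: "real q \<ge> X powr (1 / (1 - \<delta>))" using qa unfolding q\<^sub>0_def by linarith
      have Qpos: "real q > 0" using q3 by simp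
      have Qbig: "real q powr \<delta> \<le> 2 * \<epsilon> * \<rho>\<^sub>1 * t * real q"
      proof -
        have "X = (X powr (1 / (1 - \<delta>))) powr (1 - \<delta>)"
          using Xpos d1 by (simp add: powr_powr)
        also have "\<dots> \<le> real q powr (1 - \<delta>)"
          using qX d1 by (intro powr_mono2) auto
        finally have Xle: "X \<le> real q powr (1 - \<delta>)" .
        have "real q = real q powr (\<delta> + (1 - \<delta>))" using Qpos by simp
        also have "\<dots> = real q powr \<delta> * real q powr (1 - \<delta>)" by (rule powr_add)
        finally have Qeq: "real q = real q powr \<delta> * real q powr (1 - \<delta>)" .
        have "real q powr \<delta> * X \<le> real q powr \<delta> * real q powr (1 - \<delta>)"
          using Xle by (intro mult_left_mono) auto
        then have "real q powr \<delta> * X \<le> real q" using Qeq by simp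
        then have "real q powr \<delta> \<le> real q / X" using Xpos by (simp add: field_simps)
        also have "real q / X = 2 * \<epsilon> * \<rho>\<^sub>1 * t * real q" unfolding X_def by simp
        finally show ?thesis .
      qed
      show "\<forall>S::int set. \<forall>h::int. \<forall>k::int. \<forall>v::int.
          S \<subseteq> {0..<int q} \<and> real (card S) \<ge> \<rho>\<^sub>1 * real q \<and>
          1 \<le> h \<and> h \<le> int q - 1 \<and>
          (\<forall>a::int. \<bar>real_of_int a\<bar> \<le> real q / 2 \<and>
              cmod (fT ((\<lambda>s. (h * s) mod int q) ` S) (real_of_int a / real q))
                > \<epsilon> * real (card S)
            \<longrightarrow> \<bar>real_of_int a\<bar> < real q powr (1 - \<rho>\<^sub>1 * \<epsilon>\<^sup>2)) \<and>
          1 \<le> v \<and> real_of_int v < real q powr (\<rho>\<^sub>1 * \<epsilon>\<^sup>2 / 4)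
          \<longrightarrow> (\<forall>u::real. 5 * real_of_int v * real q powr (- (\<rho>\<^sub>1 * \<epsilon>\<^sup>2)) \<le> \<bar>u\<bar>
                  \<and> \<bar>u\<bar> \<le> 1 / 2 \<longrightarrow>
                cmod (fT (W (int q) S h k v) u)
                  < 2 * pi * (\<epsilon> / \<rho>\<^sub>1) powr (1 / 3) * real (card S))"
      proof (intro allI impI)
        fix S :: "int set" and h k v :: int and u :: real
        assume H: "S \<subseteq> {0..<int q} \<and> real (card S) \<ge> \<rho>\<^sub>1 * real q \<and>
          1 \<le> h \<and> h \<le> int q - 1 \<and>
          (\<forall>a::int. \<bar>real_of_int a\<bar> \<le> real q / 2 \<and>
              cmod (fT ((\<lambda>s. (h * s) mod int q) ` S) (real_of_int a / real q))
                > \<epsilon> * real (card S)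
            \<longrightarrow> \<bar>real_of_int a\<bar> < real q powr (1 - \<rho>\<^sub>1 * \<epsilon>\<^sup>2)) \<and>
          1 \<le> v \<and> real_of_int v < real q powr (\<rho>\<^sub>1 * \<epsilon>\<^sup>2 / 4)"
          and U: "5 * real_of_int v * real q powr (- (\<rho>\<^sub>1 * \<epsilon>\<^sup>2)) \<le> \<bar>u\<bar> \<and> \<bar>u\<bar> \<le> 1 / 2"
        have "cmod (fT (W (int q) S h k v) u) < 2 * pi * t * real (card S)"
          by (rule core[where \<delta> = "\<rho>\<^sub>1 * \<epsilon>\<^sup>2" and \<rho> = \<rho>\<^sub>1 and \<epsilon> = \<epsilon>])
             (use qa q3 r \<epsilon> tpos thalf teps d0 d1 Qbig H U in \<open>auto simp: \<delta>_def\<close>)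
        then show "cmod (fT (W (int q) S h k v) u) < 2 * pi * (\<epsilon> / \<rho>\<^sub>1) powr (1 / 3) * real (card S)"
          unfolding t_def .
      qed
    qed
  qed
  show ?thesis using e0 main by blast
qed

end
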